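(* Let $K\ge 2$, let $\mathcal{D}$ be a probability distribution on $\mathcal{X}\times\mathcal{Y}$ with $\mathcal{Y}=\{1,\dots,K\}$, and let $\rho$ be a probability distribution over classifiers $h:\mathcal{X}\to\mathcal{Y}$. Then $$\mathbb{E}_{h,h'\sim\rho}[L(h,h')]\;\le\;\frac{2(K-1)}{K}\Big(\mathbb{E}_{h\sim\rho}[L(h)]-\tfrac12\,\mathbb{E}_{h,h'\sim\rho}[D(h,h')]\Big),$$ where $h,h'$ are drawn independently from $\rho$.
   Context: The error rate is $L(h)=\mathbb{E}_{(X,Y)\sim\mathcal{D}}[\mathbb{1}(h(X)\neq Y)]$; the tandem loss is $L(h,h')=\mathbb{E}_{(X,Y)\sim\mathcal{D}}[\mathbb{1}(h(X)\neq Y)\mathbb{1}(h'(X)\neq Y)]$; the disagreement rate is $D(h,h')=\mathbb{E}_{X\sim\mathcal{D}}[\mathbb{1}(h(X)\neq h'(X))]$. *)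

theory Defs
  imports "HOL-Probability.Probability"
begin

definition err :: "('x \<times> nat) measure \<Rightarrow> ('x \<Rightarrow> nat) \<Rightarrow> real" where
  "err D h = (\<integral>z. of_bool (h (fst z) \<noteq> snd z) \<partial>D)"

definition tandem :: "('x \<times> nat) measure \<Rightarrow> ('x \<Rightarrow> nat) \<Rightarrow> ('x \<Rightarrow> nat) \<Rightarrow> real" where
  "tandem D h h' = (\<integral>z. of_bool (h (fst z) \<noteq> snd z) * of_bool (h' (fst z) \<noteq> snd z) \<partial>D)"

definition disagree :: "('x \<times> nat) measure \<Rightarrow> ('x \<Rightarrow> nat) \<Rightarrow> ('x \<Rightarrow> nat) \<Rightarrow> real" where
  "disagree D h h' = (\<integral>z. of_bool (h (fst z) \<noteq> h' (fst z)) \<partial>D)"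

end

theory Submission imports Defs begin

lemma fub:
  fixes f :: "'a \<Rightarrow> 'b \<Rightarrow> real"
  assumes M: "prob_space M" and N: "prob_space N"
    and meas: "(\<lambda>w. f (fst w) (snd w)) \<in> borel_measurable (M \<Otimes>\<^sub>M N)"
    and bnd: "\<And>x y. x \<in> space M \<Longrightarrow> y \<in> space N \<Longrightarrow> \<bar>f x y\<bar> \<le> 1"
  shows "(\<integral>w. f (fst w) (snd w) \<partial>(M \<Otimes>\<^sub>M N)) = (\<integral>x. \<integral>y. f x y \<partial>N \<partial>M)"
    and "(\<integral>x. \<integral>y. f x y \<partial>N \<partial>M) = (\<integral>y. \<integral>x. f x y \<partial>M \<partial>N)"
    and "integrable N (\<lambda>y. \<integral>x. f x y \<partial>M)"
proof -
  interpret pair_prob_space M N using M N by (simp add: pair_prob_space.intro pair_sigma_finite.intro prob_space_imp_sigma_finite)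
  interpret P: prob_space "M \<Otimes>\<^sub>M N" by (rule prob_space_pair) (use M N in auto)
  have cp: "case_prod f = (\<lambda>w. f (fst w) (snd w))" by (simp add: case_prod_beta')
  have int: "integrable (M \<Otimes>\<^sub>M N) (case_prod f)"
    unfolding cp
    by (rule P.integrable_const_bound[where B=1]) (use meas bnd in \<open>auto simp: space_pair_measure\<close>)
  show "(\<integral>w. f (fst w) (snd w) \<partial>(M \<Otimes>\<^sub>M N)) = (\<integral>x. \<integral>y. f x y \<partial>N \<partial>M)"
    using integral_fst'[OF int] cp by simp
  show "(\<integral>x. \<integral>y. f x y \<partial>N \<partial>M) = (\<integral>y. \<integral>x. f x y \<partial>M \<partial>N)"
    using Fubini_integral[OF int] by simp
  show "integrable N (\<lambda>y. \<integral>x. f x y \<partial>M)"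
    using integrable_snd[OF int] .
qed

lemma prodsq:
  fixes g :: "'a \<Rightarrow> real"
  assumes M: "prob_space M" and meas: "g \<in> borel_measurable M"
    and bnd: "\<And>x. x \<in> space M \<Longrightarrow> \<bar>g x\<bar> \<le> 1"
  shows "(\<integral>w. g (fst w) * g (snd w) \<partial>(M \<Otimes>\<^sub>M M)) = (\<integral>x. g x \<partial>M)^2"
proof -
  interpret prob_space M by (rule M)
  have "(\<integral>w. g (fst w) * g (snd w) \<partial>(M \<Otimes>\<^sub>M M)) = (\<integral>x. \<integral>y. g x * g y \<partial>M \<partial>M)"
    by (rule fub(1)[OF M M]) (use meas bnd in \<open>auto simp: abs_mult intro: mult_le_one\<close>)
  also have "\<dots> = (\<integral>x. g x * (\<integral>y. g y \<partial>M) \<partial>M)" by simp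
  also have "\<dots> = (\<integral>x. g x \<partial>M)^2" by (simp add: power2_eq_square)
  finally show ?thesis .
qed

lemma neq_meas:
  fixes f g :: "'a \<Rightarrow> nat"
  assumes "f \<in> measurable M (count_space UNIV)" "g \<in> measurable M (count_space UNIV)"
  shows "(\<lambda>w. of_bool (f w \<noteq> g w) :: real) \<in> borel_measurable M"
    and "(\<lambda>w. of_bool (f w = g w) :: real) \<in> borel_measurable M"
proof -
  have "(\<lambda>w. (f w, g w)) \<in> measurable M (count_space UNIV \<Otimes>\<^sub>M count_space UNIV)"
    using assms by (intro measurable_Pair)
  then have pm: "(\<lambda>w. (f w, g w)) \<in> measurable M (count_space UNIV)"
    by (simp add: pair_measure_countable)
  show "(\<lambda>w. of_bool (f w \<noteq> g w) :: real) \<in> borel_measurable M"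
    using measurable_compose[OF pm, of "\<lambda>(a,b). of_bool (a \<noteq> b) :: real" borel] by simp
  show "(\<lambda>w. of_bool (f w = g w) :: real) \<in> borel_measurable M"
    using measurable_compose[OF pm, of "\<lambda>(a,b). of_bool (a = b) :: real" borel] by simp
qed

lemma ineq:
  fixes p :: "nat \<Rightarrow> real"
  assumes K: "K \<ge> 2" and y: "y \<in> {1..K}" and s: "(\<Sum>j\<in>{1..K}. p j) = 1"
  shows "(1 - p y)^2 \<le> (2 * (real K - 1) / real K) * ((1 - p y) - 1/2 * (1 - (\<Sum>j\<in>{1..K}. (p j)^2)))"
proof -
  define S where "S = {1..K} - {y}"
  define n where "n = real K - 1"
  have fS: "finite S" and cS: "card S = K - 1" using y by (auto simp: S_def)
  have nS: "real (card S) = n" using cS K by (simp add: n_def of_nat_diff)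
  have n1: "n \<ge> 1" using K by (simp add: n_def)
  define a where "a = (\<Sum>j\<in>S. p j)"
  define T where "T = (\<Sum>j\<in>S. (p j)^2)"
  have ins: "{1..K} = insert y S" "y \<notin> S" using y by (auto simp: S_def)
  have a: "a = 1 - p y" using s unfolding ins a_def using fS ins(2) by simp
  have sq: "(\<Sum>j\<in>{1..K}. (p j)^2) = (p y)^2 + T" unfolding ins T_def using fS ins(2) by simp
  have "0 \<le> (\<Sum>j\<in>S. (p j - a/n)^2)" by (rule sum_nonneg) simp
  also have "\<dots> = (\<Sum>j\<in>S. (p j)^2 - 2*(a/n) * p j + (a/n)^2)"
    by (rule sum.cong) (auto simp: power2_diff algebra_simps)
  also have "\<dots> = T - 2*(a/n)*a + n*(a/n)^2"
    by (simp add: sum.distrib sum_subtractf sum_distrib_left[symmetric] sum_divide_distrib[symmetric] T_def a_def nS)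
  also have "\<dots> = T - a^2/n" using n1 by (simp add: field_simps power2_eq_square)
  finally have CS: "a^2 \<le> n*T" using n1 by (simp add: field_simps)
  have K': "real K = n + 1" by (simp add: n_def)
  have "(2 * (real K - 1) / real K) * ((1 - p y) - 1/2 * (1 - (\<Sum>j\<in>{1..K}. (p j)^2)))
     = n/(n+1) * (a^2 + T)" proof -
    have py: "p y = 1 - a" using a by simp
    show ?thesis unfolding sq K' py using n1
      by (simp add: field_simps power2_eq_square)
  qed
  moreover have "a^2 \<le> n/(n+1) * (a^2 + T)" using CS n1 by (simp add: field_simps)
  ultimately show ?thesis using a by simp
qed

theorem lemma4:
  fixes K :: nat
    and D :: "('x \<times> nat) measure"
    and \<rho> :: "('x \<Rightarrow> nat) measure"
  assumes K: "K \<ge> 2"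
    and D_prob: "prob_space D"
    and labels: "\<forall>z \<in> space D. snd z \<in> {1..K}"
    and snd_meas: "snd \<in> measurable D (count_space UNIV)"
    and \<rho>_prob: "prob_space \<rho>"
    and classifiers: "\<forall>h \<in> space \<rho>. \<forall>x. h x \<in> {1..K}"
    and eval_meas: "(\<lambda>(h, z). h (fst z)) \<in> measurable (\<rho> \<Otimes>\<^sub>M D) (count_space UNIV)"
  shows "(\<integral>p. tandem D (fst p) (snd p) \<partial>(\<rho> \<Otimes>\<^sub>M \<rho>))
         \<le> (2 * (real K - 1) / real K) *
            ((\<integral>h. err D h \<partial>\<rho>) - 1/2 * (\<integral>p. disagree D (fst p) (snd p) \<partial>(\<rho> \<Otimes>\<^sub>M \<rho>)))"
proof -
  interpret D: prob_space D by (rule D_prob)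
  interpret R: prob_space \<rho> by (rule \<rho>_prob)
  define c where "c = 2 * (real K - 1) / real K"
  have ev: "(\<lambda>w. fst w (fst (snd w))) \<in> measurable (\<rho> \<Otimes>\<^sub>M D) (count_space UNIV)"
    using eval_meas by (simp add: case_prod_beta')
  have ev1: "(\<lambda>w. fst (fst w) (fst (snd w))) \<in> measurable ((\<rho> \<Otimes>\<^sub>M \<rho>) \<Otimes>\<^sub>M D) (count_space UNIV)"
    using measurable_compose[OF measurable_Pair[OF measurable_compose[OF measurable_fst measurable_fst] measurable_snd] ev]
    by simp
  have ev2: "(\<lambda>w. snd (fst w) (fst (snd w))) \<in> measurable ((\<rho> \<Otimes>\<^sub>M \<rho>) \<Otimes>\<^sub>M D) (count_space UNIV)"
    using measurable_compose[OF measurable_Pair[OF measurable_compose[OF measurable_fst measurable_snd] measurable_snd] ev]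
    by simp
  have y1: "(\<lambda>w. snd (snd w)) \<in> measurable (\<rho> \<Otimes>\<^sub>M D) (count_space UNIV)"
    by (rule measurable_compose[OF measurable_snd snd_meas])
  have y2: "(\<lambda>w. snd (snd w)) \<in> measurable ((\<rho> \<Otimes>\<^sub>M \<rho>) \<Otimes>\<^sub>M D) (count_space UNIV)"
    by (rule measurable_compose[OF measurable_snd snd_meas])
  have evz: "(\<lambda>h. h (fst z)) \<in> measurable \<rho> (count_space UNIV)" if "z \<in> space D" for z
    using measurable_compose[OF measurable_Pair2'[OF that] ev] by simp
  define A where "A h z = (of_bool (h (fst z) \<noteq> snd z) :: real)" for h :: "'x \<Rightarrow> nat" and z :: "'x \<times> nat"
  define p where "p j z = (\<integral>h. (of_bool (h (fst z) = j) :: real) \<partial>\<rho>)" for j :: nat and z :: "'x \<times> nat"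
  define F1 where "F1 z = (\<integral>P. A (fst P) z * A (snd P) z \<partial>(\<rho> \<Otimes>\<^sub>M \<rho>))" for z :: "'x \<times> nat"
  define F2 where "F2 z = (\<integral>h. A h z \<partial>\<rho>)" for z :: "'x \<times> nat"
  define F3 where "F3 z = (\<integral>P. (of_bool (fst P (fst z) \<noteq> snd P (fst z)) :: real) \<partial>(\<rho> \<Otimes>\<^sub>M \<rho>))" for z :: "'x \<times> nat"
  have pP: "prob_space (\<rho> \<Otimes>\<^sub>M \<rho>)" by (rule prob_space_pair) (use \<rho>_prob in auto)
  have m1: "(\<lambda>w. A (fst (fst w)) (snd w) * A (snd (fst w)) (snd w)) \<in> borel_measurable ((\<rho> \<Otimes>\<^sub>M \<rho>) \<Otimes>\<^sub>M D)"
    unfolding A_def by (intro borel_measurable_times neq_meas(1) ev1 ev2 y2)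
  have S1: "(\<integral>P. tandem D (fst P) (snd P) \<partial>(\<rho> \<Otimes>\<^sub>M \<rho>)) = (\<integral>z. F1 z \<partial>D)"
    and I1: "integrable D F1"
  proof -
    have b: "\<bar>A (fst P) z * A (snd P) z\<bar> \<le> 1" if "P \<in> space (\<rho> \<Otimes>\<^sub>M \<rho>)" "z \<in> space D" for P z by (simp add: A_def)
    note f = fub(2)[OF pP D_prob, of "\<lambda>P z. A (fst P) z * A (snd P) z", OF m1 b] fub(3)[OF pP D_prob, of "\<lambda>P z. A (fst P) z * A (snd P) z", OF m1 b]
    show "(\<integral>P. tandem D (fst P) (snd P) \<partial>(\<rho> \<Otimes>\<^sub>M \<rho>)) = (\<integral>z. F1 z \<partial>D)"
      using f(1) by (simp add: F1_def[abs_def] tandem_def A_def)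
    show "integrable D F1" using f(2) by (simp add: F1_def[abs_def])
  qed
  have m2: "(\<lambda>w. A (fst w) (snd w)) \<in> borel_measurable (\<rho> \<Otimes>\<^sub>M D)"
    unfolding A_def by (intro neq_meas(1) ev y1)
  have S2: "(\<integral>h. err D h \<partial>\<rho>) = (\<integral>z. F2 z \<partial>D)"
    and I2: "integrable D F2"
  proof -
    have b: "\<bar>A h z\<bar> \<le> 1" if "h \<in> space \<rho>" "z \<in> space D" for h z by (simp add: A_def)
    note f = fub(2)[OF \<rho>_prob D_prob, of "\<lambda>h z. A h z", OF m2 b] fub(3)[OF \<rho>_prob D_prob, of "\<lambda>h z. A h z", OF m2 b]
    show "(\<integral>h. err D h \<partial>\<rho>) = (\<integral>z. F2 z \<partial>D)"
      using f(1) by (simp add: F2_def[abs_def] err_def A_def)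
    show "integrable D F2" using f(2) by (simp add: F2_def[abs_def])
  qed
  have m3: "(\<lambda>w. of_bool (fst (fst w) (fst (snd w)) \<noteq> snd (fst w) (fst (snd w))) :: real) \<in> borel_measurable ((\<rho> \<Otimes>\<^sub>M \<rho>) \<Otimes>\<^sub>M D)"
    by (intro neq_meas(1) ev1 ev2)
  have S3: "(\<integral>P. disagree D (fst P) (snd P) \<partial>(\<rho> \<Otimes>\<^sub>M \<rho>)) = (\<integral>z. F3 z \<partial>D)"
    and I3: "integrable D F3"
  proof -
    have b: "\<bar>of_bool (fst P (fst z) \<noteq> snd P (fst z)) :: real\<bar> \<le> 1" if "P \<in> space (\<rho> \<Otimes>\<^sub>M \<rho>)" "z \<in> space D" for P z by simp
    note f = fub(2)[OF pP D_prob, of "\<lambda>P z. of_bool (fst P (fst z) \<noteq> snd P (fst z)) :: real", OF m3 b] fub(3)[OF pP D_prob, of "\<lambda>P z. of_bool (fst P (fst z) \<noteq> snd P (fst z)) :: real", OF m3 b]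
    show "(\<integral>P. disagree D (fst P) (snd P) \<partial>(\<rho> \<Otimes>\<^sub>M \<rho>)) = (\<integral>z. F3 z \<partial>D)"
      using f(1) by (simp add: F3_def[abs_def] disagree_def)
    show "integrable D F3" using f(2) by (simp add: F3_def[abs_def])
  qed
  have pw: "F1 z \<le> c * (F2 z - 1/2 * F3 z)" if z: "z \<in> space D" for z
  proof -
    have yK: "snd z \<in> {1..K}" using labels z by auto
    have mj: "(\<lambda>h. of_bool (h (fst z) = j) :: real) \<in> borel_measurable \<rho>" for j
      by (intro neq_meas(2) evz[OF z]) simp
    have ij: "integrable \<rho> (\<lambda>h. of_bool (h (fst z) = j) :: real)" for j
      by (rule R.integrable_const_bound[where B=1]) (use mj in auto)
    have mA: "(\<lambda>h. A h z) \<in> borel_measurable \<rho>"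
      unfolding A_def by (intro neq_meas(1) evz[OF z]) simp
    have F2e: "F2 z = 1 - p (snd z) z"
    proof -
      have "F2 z = (\<integral>h. 1 - of_bool (h (fst z) = snd z) \<partial>\<rho>)"
        unfolding F2_def A_def by (rule Bochner_Integration.integral_cong) auto
      also have "\<dots> = 1 - p (snd z) z" unfolding p_def
        by (subst Bochner_Integration.integral_diff) (use ij R.prob_space in auto)
      finally show ?thesis .
    qed
    have F1e: "F1 z = (F2 z)^2" unfolding F1_def F2_def
      by (rule prodsq[OF \<rho>_prob mA]) (auto simp: A_def)
    have ind: "(\<Sum>j\<in>{1..K}. of_bool (h (fst z) = j) :: real) = 1" if "h \<in> space \<rho>" for h
    proof -
      have "h (fst z) \<in> {1..K}" using classifiers that by auto
      then have "{1..K} \<inter> {j. h (fst z) = j} = {h (fst z)}" by auto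
      then show ?thesis by (simp add: sum.If_cases)
    qed
    have sp: "(\<Sum>j\<in>{1..K}. p j z) = 1"
    proof -
      have "(\<Sum>j\<in>{1..K}. p j z) = (\<integral>h. (\<Sum>j\<in>{1..K}. of_bool (h (fst z) = j) :: real) \<partial>\<rho>)"
        unfolding p_def by (rule Bochner_Integration.integral_sum[symmetric]) (use ij in auto)
      also have "\<dots> = (\<integral>h. 1 \<partial>\<rho>)" by (rule Bochner_Integration.integral_cong[OF refl ind])
      finally show ?thesis using R.prob_space by simp
    qed
    have F3e: "F3 z = 1 - (\<Sum>j\<in>{1..K}. (p j z)^2)"
    proof -
      have "F3 z = (\<integral>P. 1 - (\<Sum>j\<in>{1..K}. of_bool (fst P (fst z) = j) * of_bool (snd P (fst z) = j)) \<partial>(\<rho> \<Otimes>\<^sub>M \<rho>))"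
        unfolding F3_def
      proof (rule Bochner_Integration.integral_cong)
        fix P assume "P \<in> space (\<rho> \<Otimes>\<^sub>M \<rho>)"
        then have a: "fst P (fst z) \<in> {1..K}" "snd P (fst z) \<in> {1..K}"
          using classifiers by (auto simp: space_pair_measure)
        have "(\<Sum>j\<in>{1..K}. of_bool (fst P (fst z) = j) * of_bool (snd P (fst z) = j) :: real)
              = of_bool (fst P (fst z) = snd P (fst z))"
        proof (cases "fst P (fst z) = snd P (fst z)")
          case True
          then have "{1..K} \<inter> {j. fst P (fst z) = j \<and> snd P (fst z) = j} = {fst P (fst z)}" using a by auto
          then show ?thesis using True by (simp add: sum.If_cases flip: of_bool_conj)
        next
          case False
          then show ?thesis by (intro trans[OF sum.neutral]) auto
        qed
        then show "(of_bool (fst P (fst z) \<noteq> snd P (fst z)) :: real) =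
          1 - (\<Sum>j\<in>{1..K}. of_bool (fst P (fst z) = j) * of_bool (snd P (fst z) = j))" by simp
      qed simp
      also have "\<dots> = 1 - (\<Sum>j\<in>{1..K}. (\<integral>P. of_bool (fst P (fst z) = j) * of_bool (snd P (fst z) = j) \<partial>(\<rho> \<Otimes>\<^sub>M \<rho>)) :: real)"
      proof -
        interpret P: prob_space "\<rho> \<Otimes>\<^sub>M \<rho>" by (rule pP)
        have ii: "integrable (\<rho> \<Otimes>\<^sub>M \<rho>) (\<lambda>P. of_bool (fst P (fst z) = j) * of_bool (snd P (fst z) = j) :: real)" for j
          by (rule P.integrable_const_bound[where B=1]) (use mj in auto)
        let ?g = "\<lambda>j P. (of_bool (fst P (fst z) = j) * of_bool (snd P (fst z) = j) :: real)"
        have e1: "(\<integral>P. (\<Sum>j\<in>{1..K}. ?g j P) \<partial>(\<rho> \<Otimes>\<^sub>M \<rho>)) = (\<Sum>j\<in>{1..K}. (\<integral>P. ?g j P \<partial>(\<rho> \<Otimes>\<^sub>M \<rho>)))"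
          by (rule Bochner_Integration.integral_sum) (rule ii)
        have isum: "integrable (\<rho> \<Otimes>\<^sub>M \<rho>) (\<lambda>P. (\<Sum>j\<in>{1..K}. ?g j P))"
          by (rule Bochner_Integration.integrable_sum) (rule ii)
        have e2: "(\<integral>P. 1 - (\<Sum>j\<in>{1..K}. ?g j P) \<partial>(\<rho> \<Otimes>\<^sub>M \<rho>)) = (\<integral>P. 1 \<partial>(\<rho> \<Otimes>\<^sub>M \<rho>)) - (\<integral>P. (\<Sum>j\<in>{1..K}. ?g j P) \<partial>(\<rho> \<Otimes>\<^sub>M \<rho>))"
          by (rule Bochner_Integration.integral_diff[OF P.integrable_const isum])
        have e3: "(\<integral>P. 1 \<partial>(\<rho> \<Otimes>\<^sub>M \<rho>)) = (1::real)" using P.prob_space by simp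
        show ?thesis by (simp only: e1 e2 e3)
      qed
      also have "\<dots> = 1 - (\<Sum>j\<in>{1..K}. (p j z)^2)"
        unfolding p_def by (subst prodsq[OF \<rho>_prob mj]) auto
      finally show ?thesis .
    qed
    show ?thesis unfolding F1e F2e F3e c_def
      by (rule ineq[OF K yK sp])
  qed
  have "(\<integral>z. F1 z \<partial>D) \<le> (\<integral>z. c * (F2 z - 1/2 * F3 z) \<partial>D)"
    by (rule integral_mono) (use I1 I2 I3 pw in auto)
  also have "\<dots> = c * ((\<integral>z. F2 z \<partial>D) - 1/2 * (\<integral>z. F3 z \<partial>D))"
    using I2 I3 by simp
  finally show ?thesis unfolding S1 S2 S3 c_def .
qed

end
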